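(* Let $d\ge2$ and let $P$ be an essential pattern subgroup of $G(d)$ with $P(d-1)=G(d-1)$. Then $P$ contains $[a_1,a_{d-1}]$ and does not contain $[a_0,a_{d-1}]$ if and only if $[G(d):P]=4$.
   Context: Let $X=\{0,1\}$, $G(d)$ the automorphism group of the finite binary rooted tree of words of length $\le d$; finite sections $g(wv)=g(w)g_w(v)$; $\pi_k$ restriction to words of length $\le k$, $P(k)=\pi_k(P)$. A subgroup $P\le G(d)$ is an essential pattern group if for every $p\in P$ and $i\in\{0,1\}$ there is $q\in P$ with $\pi_{d-1}(q)=p_i$. For $0\le i\le d-1$, $a_i\in G(d)$ swaps $0^i0w$ with $0^i1w$ for all words $w$ and fixes all other words. $[h,k]=h^{-1}k^{-1}hk$. *)

theory Defs
  imports "HOL-Algebra.Algebra"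
begin

text \<open>Vertices of the binary rooted tree: words over X = {0,1}, encoded as bool lists
  (False = 0, True = 1). An automorphism of the tree of words of length at most d is a
  bijection of words that preserves length and prefixes on words of length at most d;
  we normalise it to be the identity on longer words.\<close>

definition tree_aut :: "nat \<Rightarrow> (bool list \<Rightarrow> bool list) \<Rightarrow> bool" where
  "tree_aut d f \<longleftrightarrow> bij f \<and> (\<forall>w. length (f w) = length w)
     \<and> (\<forall>w. d < length w \<longrightarrow> f w = w)
     \<and> (\<forall>w v. length (w @ v) \<le> d \<longrightarrow> take (length w) (f (w @ v)) = f w)"

definition G :: "nat \<Rightarrow> (bool list \<Rightarrow> bool list) monoid" where
  "G d = \<lparr>carrier = {f. tree_aut d f}, monoid.mult = (\<lambda>f g. f \<circ> g), one = id\<rparr>"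

definition restr :: "nat \<Rightarrow> (bool list \<Rightarrow> bool list) \<Rightarrow> (bool list \<Rightarrow> bool list)" where
  "restr k g = (\<lambda>w. if length w \<le> k then g w else w)"

text \<open>Section g_w of g in G(d) at the word w (an element of G(d - |w|)):
  g(wv) = g(w) g_w(v).\<close>
definition sect :: "nat \<Rightarrow> (bool list \<Rightarrow> bool list) \<Rightarrow> bool list \<Rightarrow> (bool list \<Rightarrow> bool list)" where
  "sect d g w = (\<lambda>v. if length v \<le> d - length w then drop (length w) (g (w @ v)) else v)"

definition essential_pattern :: "nat \<Rightarrow> (bool list \<Rightarrow> bool list) set \<Rightarrow> bool" where
  "essential_pattern d P \<longleftrightarrow> subgroup P (G d) \<and>
     (\<forall>p\<in>P. \<forall>i::bool. \<exists>q\<in>P. restr (d - 1) q = sect d p [i])"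

definition a :: "nat \<Rightarrow> nat \<Rightarrow> (bool list \<Rightarrow> bool list)" where
  "a d i = (\<lambda>w. if i < length w \<and> length w \<le> d \<and> take i w = replicate i False
               then take i w @ [\<not> w ! i] @ drop (Suc i) w else w)"

definition comm :: "nat \<Rightarrow> (bool list \<Rightarrow> bool list) \<Rightarrow> (bool list \<Rightarrow> bool list) \<Rightarrow> (bool list \<Rightarrow> bool list)" where
  "comm d h k = inv\<^bsub>G d\<^esub> h \<otimes>\<^bsub>G d\<^esub> inv\<^bsub>G d\<^esub> k \<otimes>\<^bsub>G d\<^esub> h \<otimes>\<^bsub>G d\<^esub> k"

definition tree_index :: "nat \<Rightarrow> (bool list \<Rightarrow> bool list) set \<Rightarrow> nat" where
  "tree_index d P = card (rcosets\<^bsub>G d\<^esub> P)"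

end

theory Submission
  imports Defs
begin


lemma carrier_G: "f \<in> carrier (G d) \<longleftrightarrow> tree_aut d f"
  by (simp add: G_def)
lemma mult_G[simp]: "f \<otimes>\<^bsub>G d\<^esub> g = f \<circ> g"
  by (simp add: G_def)
lemma one_G[simp]: "\<one>\<^bsub>G d\<^esub> = id"
  by (simp add: G_def)

lemma ta_len: "tree_aut d f \<Longrightarrow> length (f w) = length w"
  by (simp add: tree_aut_def)
lemma ta_big: "tree_aut d f \<Longrightarrow> d < length w \<Longrightarrow> f w = w"
  by (simp add: tree_aut_def)
lemma ta_pref: "tree_aut d f \<Longrightarrow> length (w @ v) \<le> d \<Longrightarrow> take (length w) (f (w @ v)) = f w"
  by (simp add: tree_aut_def)
lemma ta_bij: "tree_aut d f \<Longrightarrow> bij f"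
  by (simp add: tree_aut_def)

lemma ta_split: assumes "tree_aut d f" "length (w @ v) \<le> d"
  shows "f (w @ v) = f w @ drop (length w) (f (w @ v))"
  by (metis append_take_drop_id assms ta_pref)

lemma ta_id: "tree_aut d id"
  by (simp add: tree_aut_def)

lemma ta_comp: assumes f: "tree_aut d f" and g: "tree_aut d g" shows "tree_aut d (f \<circ> g)"
  unfolding tree_aut_def
proof (intro conjI allI impI)
  show "bij (f \<circ> g)" using f g ta_bij bij_comp by blast
  fix w :: "bool list" show "length ((f \<circ> g) w) = length w" using f g by (simp add: ta_len)
next
  fix w :: "bool list" assume "d < length w" then show "(f \<circ> g) w = w" using f g by (simp add: ta_big)
next
  fix w v :: "bool list" assume l: "length (w @ v) \<le> d"
  have e: "g (w @ v) = g w @ drop (length w) (g (w @ v))" using ta_split[OF g l] .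
  have l2: "length (g w @ drop (length w) (g (w @ v))) \<le> d" using l e ta_len[OF g] by metis
  have "take (length (g w)) (f (g w @ drop (length w) (g (w @ v)))) = f (g w)"
    using ta_pref[OF f l2] .
  then show "take (length w) ((f \<circ> g) (w @ v)) = (f \<circ> g) w"
    using e ta_len[OF g] by simp
qed

lemma ta_inv: assumes f: "tree_aut d f" shows "tree_aut d (inv_into UNIV f)"
  unfolding tree_aut_def
proof (intro conjI allI impI)
  have b: "bij f" using ta_bij[OF f] .
  show "bij (inv_into UNIV f)" using b bij_imp_bij_inv by blast
  have fi: "\<And>w. f (inv_into UNIV f w) = w" using b by (meson bij_inv_eq_iff)
  have if': "\<And>w. inv_into UNIV f (f w) = w" using b by (simp add: bij_def)
  show l: "\<And>w. length (inv_into UNIV f w) = length w" using fi ta_len[OF f] by metis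
  fix w :: "bool list"
  show "d < length w \<Longrightarrow> inv_into UNIV f w = w" using if' ta_big[OF f] by metis
  fix v assume lv: "length (w @ v) \<le> d"
  define u where "u = inv_into UNIV f (w @ v)"
  have lu: "length u = length (w @ v)" using l u_def by simp
  have "f u = w @ v" using fi u_def by simp
  moreover have "u = take (length w) u @ drop (length w) u" by simp
  ultimately have "take (length w) (w @ v) = f (take (length w) u)"
    using ta_pref[OF f, of "take (length w) u" "drop (length w) u"] lu lv
    by (metis append_eq_conv_conj length_take lu min.absorb1 le_add1 length_append)
  then have "f (take (length w) u) = w" by simp
  then show "take (length w) (inv_into UNIV f (w @ v)) = inv_into UNIV f w" using if' u_def by metis
qed

lemma group_G: "group (G d)"
proof (rule groupI)
  show "\<And>x y. x \<in> carrier (G d) \<Longrightarrow> y \<in> carrier (G d) \<Longrightarrow> x \<otimes>\<^bsub>G d\<^esub> y \<in> carrier (G d)"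
    by (simp add: carrier_G ta_comp)
  show "\<one>\<^bsub>G d\<^esub> \<in> carrier (G d)" by (simp add: carrier_G ta_id)
  show "\<And>x y z. x \<otimes>\<^bsub>G d\<^esub> y \<otimes>\<^bsub>G d\<^esub> z = x \<otimes>\<^bsub>G d\<^esub> (y \<otimes>\<^bsub>G d\<^esub> z)" by (simp add: comp_assoc)
  show "\<And>x. \<one>\<^bsub>G d\<^esub> \<otimes>\<^bsub>G d\<^esub> x = x" by simp
  fix x assume "x \<in> carrier (G d)"
  then have t: "tree_aut d x" by (simp add: carrier_G)
  have "inv_into UNIV x \<circ> x = id" using ta_bij[OF t] by (simp add: bij_def)
  then show "\<exists>y\<in>carrier (G d). y \<otimes>\<^bsub>G d\<^esub> x = \<one>\<^bsub>G d\<^esub>"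
    using ta_inv[OF t] by (auto simp: carrier_G)
qed

lemma inv_G: assumes "tree_aut d f" shows "inv\<^bsub>G d\<^esub> f = inv_into UNIV f"
proof -
  have "inv_into UNIV f \<circ> f = id" using ta_bij[OF assms] by (simp add: bij_def)
  then show ?thesis using group.inv_equality[OF group_G, where x=f and y="inv_into UNIV f"] assms ta_inv[OF assms]
    by (simp add: carrier_G)
qed

lemma inv_G_invol: assumes "tree_aut d f" "f \<circ> f = id" shows "inv\<^bsub>G d\<^esub> f = f"
  using group.inv_equality[OF group_G, where x=f and y=f] assms by (simp add: carrier_G)



lemma ta_restr: assumes f: "tree_aut (Suc n) f" shows "tree_aut n (restr n f)"
  unfolding tree_aut_def
proof (intro conjI allI impI)
  have b: "bij f" using ta_bij[OF f] .
  have fi: "\<And>w. f (inv_into UNIV f w) = w" using b by (meson bij_inv_eq_iff)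
  have li: "\<And>w. length (inv_into UNIV f w) = length w" using fi ta_len[OF f] by metis
  have "restr n f \<circ> restr n (inv_into UNIV f) = id"
    by (rule ext) (simp add: restr_def li fi)
  moreover have "restr n (inv_into UNIV f) \<circ> restr n f = id"
    using b by (intro ext) (simp add: restr_def ta_len[OF f] bij_def)
  ultimately show "bij (restr n f)" using o_bij by blast
  fix w :: "bool list"
  show "length (restr n f w) = length w" by (simp add: restr_def ta_len[OF f])
  show "n < length w \<Longrightarrow> restr n f w = w" by (simp add: restr_def)
  fix v assume "length (w @ v) \<le> n"
  then show "take (length w) (restr n f (w @ v)) = restr n f w"
    using ta_pref[OF f, of w v] by (simp add: restr_def)
qed

definition tog :: "nat \<Rightarrow> bool list set \<Rightarrow> bool list \<Rightarrow> bool list" where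
  "tog n S w = (if length w = Suc n \<and> butlast w \<in> S then butlast w @ [\<not> last w] else w)"

definition sd :: "'a set \<Rightarrow> 'a set \<Rightarrow> 'a set" where
  "sd S T = (S - T) \<union> (T - S)"

lemma tog_len[simp]: "length (tog n S w) = length w"
  by (simp add: tog_def)

lemma butlast_tog[simp]: "butlast (tog n S w) = butlast w"
  by (simp add: tog_def)

lemma bl_len[simp]: "length x = Suc n \<Longrightarrow> butlast x @ [last x] = x"
  by (metis append_butlast_last_id length_0_conv nat.distinct(1))

lemma ta_last: assumes g: "tree_aut (Suc n) g" and lu: "length u = n"
  shows "\<exists>c'. g (u @ [c]) = g u @ [c']"
proof -
  have e: "g (u @ [c]) = g u @ drop (length u) (g (u @ [c]))" using ta_split[OF g, of u "[c]"] lu by simp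
  have "length (drop (length u) (g (u @ [c]))) = 1" using ta_len[OF g, of "u @ [c]"] lu by simp
  then obtain c' where "drop (length u) (g (u @ [c])) = [c']" by (metis One_nat_def length_0_conv length_Suc_conv)
  then show ?thesis using e by metis
qed

lemma tog_comp: "tog n S \<circ> tog n T = tog n (sd S T)"
  by (rule ext) (auto simp: tog_def sd_def append_butlast_last_id[of x] simp del: append_butlast_last_id)

lemma tog_empty: "tog n {} = id"
  by (rule ext) (simp add: tog_def)

lemma tog_invol: "tog n S \<circ> tog n S = id"
  by (simp add: tog_comp sd_def tog_empty)

lemma tog_ta: "tree_aut (Suc n) (tog n S)"
  unfolding tree_aut_def
proof (intro conjI allI impI)
  show "bij (tog n S)" using tog_invol o_bij by blast
  fix w :: "bool list"
  show "length (tog n S w) = length w" by simp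
  show "Suc n < length w \<Longrightarrow> tog n S w = w" by (simp add: tog_def)
  fix v assume l: "length (w @ v) \<le> Suc n"
  show "take (length w) (tog n S (w @ v)) = tog n S w"
  proof (cases "v = []")
    case True then show ?thesis by simp
  next
    case False
    then have "length w < Suc n" using l by (cases v) auto
    then have "tog n S w = w" by (simp add: tog_def)
    moreover have "take (length w) (tog n S (w @ v)) = w"
      using False by (simp add: tog_def butlast_append)
    ultimately show ?thesis by simp
  qed
qed

lemma tog_inv_G: "inv\<^bsub>G (Suc n)\<^esub> (tog n S) = tog n S"
  using inv_G_invol[OF tog_ta tog_invol] .

lemma kernel_tog:
  assumes g: "tree_aut (Suc n) g" and fx: "\<And>w. length w \<le> n \<Longrightarrow> g w = w"
  shows "g = tog n {u. length u = n \<and> g (u @ [False]) = u @ [True]}"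
proof (rule ext)
  fix w :: "bool list"
  show "g w = tog n {u. length u = n \<and> g (u @ [False]) = u @ [True]} w"
  proof (cases "length w = Suc n")
    case False
    then have "length w \<le> n \<or> Suc n < length w" by linarith
    then show ?thesis using fx ta_big[OF g] False by (auto simp add: tog_def)
  next
    case True
    obtain u b where w: "w = u @ [b]" and lu: "length u = n"
      using True by (metis append_butlast_last_id length_butlast length_greater_0_conv zero_less_Suc diff_Suc_1)
    have form: "\<And>c. \<exists>c'. g (u @ [c]) = u @ [c']" using ta_last[OF g lu] fx[of u] lu by simp
    have inj: "inj g" using ta_bij[OF g] bij_def by blast
    have ne: "g (u @ [True]) \<noteq> g (u @ [False])" using inj by (auto dest: injD)
    obtain c0 where c0: "g (u @ [False]) = u @ [c0]" using form by blast
    obtain c1 where c1: "g (u @ [True]) = u @ [c1]" using form by blast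
    have "c1 = (\<not> c0)" using ne c0 c1 by auto
    then show ?thesis using w lu c0 c1 by (cases b; cases c0) (auto simp: tog_def)
  qed
qed

lemma conj_tog:
  assumes g: "tree_aut (Suc n) g" and S: "\<And>u. u \<in> S \<Longrightarrow> length u = n"
  shows "g \<circ> tog n S = tog n (g ` S) \<circ> g"
proof (rule ext)
  fix w :: "bool list"
  have inj: "inj g" using ta_bij[OF g] bij_def by blast
  show "(g \<circ> tog n S) w = (tog n (g ` S) \<circ> g) w"
  proof (cases "length w = Suc n")
    case False
    then show ?thesis by (simp add: tog_def ta_len[OF g])
  next
    case True
    obtain u b where w: "w = u @ [b]" and lu: "length u = n"
      using True by (metis append_butlast_last_id length_butlast length_greater_0_conv zero_less_Suc diff_Suc_1)
    have form: "\<And>c. \<exists>c'. g (u @ [c]) = g u @ [c']" using ta_last[OF g lu] by simp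
    obtain c0 where c0: "g (u @ [b]) = g u @ [c0]" using form by blast
    obtain c1 where c1: "g (u @ [\<not> b]) = g u @ [c1]" using form by blast
    have "g (u @ [\<not> b]) \<noteq> g (u @ [b])" using inj by (auto dest: injD)
    then have c1': "c1 = (\<not> c0)" using c0 c1 by auto
    have lgu: "length (g u) = n" using ta_len[OF g] lu by simp
    have mem: "g u \<in> g ` S \<longleftrightarrow> u \<in> S" using inj by (auto dest: injD)
    show ?thesis using w lu c0 c1 c1' lgu mem by (auto simp: tog_def)
  qed
qed



fun portr :: "(bool list \<Rightarrow> bool) \<Rightarrow> bool list \<Rightarrow> bool list \<Rightarrow> bool list" where
  "portr f p [] = []"
| "portr f p (b # w) = (b \<noteq> f p) # portr f (p @ [b]) w"

fun unportr :: "(bool list \<Rightarrow> bool) \<Rightarrow> bool list \<Rightarrow> bool list \<Rightarrow> bool list" where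
  "unportr f p [] = []"
| "unportr f p (c # w) = (c \<noteq> f p) # unportr f (p @ [c \<noteq> f p]) w"

lemma portr_len[simp]: "length (portr f p w) = length w"
  by (induction w arbitrary: p) auto

lemma unportr_len[simp]: "length (unportr f p w) = length w"
  by (induction w arbitrary: p) auto

lemma portr_unportr: "portr f p (unportr f p w) = w"
  by (induction w arbitrary: p) auto

lemma unportr_portr: "unportr f p (portr f p w) = w"
proof (induction w arbitrary: p)
  case Nil then show ?case by simp
next
  case (Cons a w)
  have "((a \<noteq> f p) \<noteq> f p) = a" by auto
  then show ?case using Cons by simp
qed

lemma portr_app: "portr f p (w @ v) = portr f p w @ portr f (p @ w) v"
  by (induction w arbitrary: p) auto

lemma portr_nth: "i < length w \<Longrightarrow> portr f p w ! i = (w ! i \<noteq> f (p @ take i w))"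
proof (induction w arbitrary: p i)
  case Nil then show ?case by simp
next
  case (Cons b w)
  then show ?case by (cases i) auto
qed

definition portn :: "nat \<Rightarrow> (bool list \<Rightarrow> bool) \<Rightarrow> bool list \<Rightarrow> bool list" where
  "portn n f w = (if length w \<le> n then portr f [] w else w)"

lemma portn_ta: "tree_aut n (portn n f)"
  unfolding tree_aut_def
proof (intro conjI allI impI)
  let ?u = "\<lambda>w. if length w \<le> n then unportr f [] w else w"
  have "portn n f \<circ> ?u = id" by (rule ext) (simp add: portn_def portr_unportr)
  moreover have "?u \<circ> portn n f = id" by (rule ext) (simp add: portn_def unportr_portr)
  ultimately show "bij (portn n f)" using o_bij by blast
  fix w :: "bool list"
  show "length (portn n f w) = length w" by (simp add: portn_def)
  show "n < length w \<Longrightarrow> portn n f w = w" by (simp add: portn_def)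
  fix v assume "length (w @ v) \<le> n"
  then show "take (length w) (portn n f (w @ v)) = portn n f w"
    by (simp add: portn_def portr_app)
qed

lemma port_pair:
  assumes lu: "length u = n" and lv: "length v = n" and lu': "length u' = n" and lv': "length v' = n"
    and k: "k < n" and tk: "take k u = take k v" and tk': "take k u' = take k v'"
    and dk: "u ! k \<noteq> v ! k" and dk': "u' ! k \<noteq> v' ! k"
  shows "\<exists>f. portr f [] u = u' \<and> portr f [] v = v'"
proof -
  define f where "f q = (if q = take (length q) u then (u' ! length q \<noteq> u ! length q)
                         else (v' ! length q \<noteq> v ! length q))" for q
  have A: "portr f [] u = u'"
  proof (rule nth_equalityI)
    show "length (portr f [] u) = length u'" using lu lu' by simp
    fix i assume "i < length (portr f [] u)"
    then have i: "i < n" using lu by simp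
    have "take i u = take (length (take i u)) u" using i lu by simp
    then show "portr f [] u ! i = u' ! i" using i lu by (auto simp add: portr_nth f_def)
  qed
  have B: "portr f [] v = v'"
  proof (rule nth_equalityI)
    show "length (portr f [] v) = length v'" using lv lv' by simp
    fix i assume "i < length (portr f [] v)"
    then have i: "i < n" using lv by simp
    have li: "length (take i v) = i" using i lv by simp
    show "portr f [] v ! i = v' ! i"
    proof (cases "i \<le> k")
      case True
      have "take i v = take i u" using tk True by (metis min.absorb1 take_take)
      then have fv: "f (take i v) = (u' ! i \<noteq> u ! i)" using li by (simp add: f_def)
      show ?thesis
      proof (cases "i = k")
        case True
        then show ?thesis using fv dk dk' i lv by (simp add: portr_nth) blast
      next
        case False
        then have "i < k" using \<open>i \<le> k\<close> by simp
        then have "u ! i = v ! i" "u' ! i = v' ! i" using tk tk' by (metis nth_take)+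
        then show ?thesis using fv i lv by (auto simp add: portr_nth)
      qed
    next
      case False
      have "take i v ! k = v ! k" "take i u ! k = u ! k" using False by simp_all
      then have "take i v \<noteq> take i u" using dk by metis
      then have fv: "f (take i v) = (v' ! i \<noteq> v ! i)" using li by (simp add: f_def)
      then show ?thesis using i lv by (auto simp add: portr_nth)
    qed
  qed
  show ?thesis using A B by blast
qed

lemma port_single:
  assumes lu: "length u = n" and lu': "length u' = n"
  shows "\<exists>f. portr f [] u = u'"
proof -
  define f where "f q = (u' ! length q \<noteq> u ! length q)" for q :: "bool list"
  have "portr f [] u = u'"
  proof (rule nth_equalityI)
    show "length (portr f [] u) = length u'" using lu lu' by simp
    fix i assume "i < length (portr f [] u)"
    then have i: "i < n" using lu by simp
    then show "portr f [] u ! i = u' ! i" using i lu by (auto simp add: portr_nth f_def)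
  qed
  then show ?thesis by blast
qed



lemma a_alt: "a d i w = (if i < length w \<and> length w \<le> d \<and> take i w = replicate i False
    then w[i := \<not> w ! i] else w)"
  by (simp add: a_def upd_conv_take_nth_drop)

lemma a_len[simp]: "length (a d i w) = length w"
  by (simp add: a_alt)

lemma a_take: "take i (a d i w) = take i w"
  by (simp add: a_alt take_update_cancel)

lemma a_invol: "a d i \<circ> a d i = id"
  by (rule ext) (auto simp add: a_alt take_update_cancel)

lemma a_ta: "tree_aut d (a d i)"
  unfolding tree_aut_def
proof (intro conjI allI impI)
  show "bij (a d i)" using a_invol o_bij by blast
  fix w :: "bool list"
  show "length (a d i w) = length w" by simp
  show "d < length w \<Longrightarrow> a d i w = w" by (simp add: a_alt)
  fix v assume l: "length (w @ v) \<le> d"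
  show "take (length w) (a d i (w @ v)) = a d i w"
  proof (cases "i < length w")
    case True
    then show ?thesis using l by (simp add: a_alt nth_append list_update_append)
  next
    case False
    then have aw: "a d i w = w" by (simp add: a_alt)
    have "take (length w) (a d i (w @ v)) = take (length w) (take i (a d i (w @ v)))"
      using False by (simp add: min_def)
    also have "\<dots> = w" using False by (simp add: a_take min_def)
    finally show ?thesis using aw by simp
  qed
qed

lemma a_top: "a (Suc n) n = tog n {replicate n False}"
proof (rule ext)
  fix w :: "bool list"
  show "a (Suc n) n w = tog n {replicate n False} w"
  proof (cases "length w = Suc n")
    case True
    have "take n w = butlast w" using True by (simp add: butlast_conv_take)
    moreover have "w ! n = last w" using True by (cases w rule: rev_cases) (auto simp: nth_append)
    moreover have "drop (Suc n) w = []" using True by simp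
    ultimately show ?thesis using True by (simp add: a_def tog_def)
  next
    case False
    then show ?thesis by (auto simp: a_def tog_def)
  qed
qed

lemma a_val: "i < n \<Longrightarrow> a (Suc n) i (replicate n False) = replicate i False @ [True] @ replicate (n - Suc i) False"
  by (simp add: a_def min_def)

lemma comm_a:
  assumes i: "i < n"
  shows "comm (Suc n) (a (Suc n) i) (a (Suc n) n)
       = tog n {replicate i False @ [True] @ replicate (n - Suc i) False, replicate n False}"
proof -
  let ?x = "replicate n False"
  let ?y = "replicate i False @ [True] @ replicate (n - Suc i) False"
  have ia: "inv\<^bsub>G (Suc n)\<^esub> (a (Suc n) i) = a (Suc n) i" using inv_G_invol[OF a_ta a_invol] .
  have it: "inv\<^bsub>G (Suc n)\<^esub> (a (Suc n) n) = a (Suc n) n" using inv_G_invol[OF a_ta a_invol] .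
  have cj: "a (Suc n) i \<circ> tog n {?x} = tog n {?y} \<circ> a (Suc n) i"
    using conj_tog[OF a_ta, where S="{?x}"] a_val[OF i] by simp
  have "comm (Suc n) (a (Suc n) i) (a (Suc n) n) = a (Suc n) i \<circ> tog n {?x} \<circ> a (Suc n) i \<circ> tog n {?x}"
    unfolding comm_def ia it by (simp add: a_top)
  also have "\<dots> = tog n {?y} \<circ> (a (Suc n) i \<circ> a (Suc n) i) \<circ> tog n {?x}"
    using cj by (simp add: comp_assoc)
  also have "\<dots> = tog n (sd {?y} {?x})" by (simp add: a_invol tog_comp)
  also have "sd {?y} {?x} = {?y, ?x}"
  proof -
    have "?y ! i \<noteq> ?x ! i" using i by (simp add: nth_append)
    then have "?y \<noteq> ?x" by metis
    then show ?thesis by (auto simp: sd_def)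
  qed
  finally show ?thesis .
qed



lemma take1: "u \<noteq> [] \<Longrightarrow> take 1 u = [u ! 0]" by (cases u) auto

lemma leaves_finite: "finite {u :: bool list. length u = n}"
  using finite_lists_length_eq[of "UNIV :: bool set" n] by simp

locale setting =
  fixes n :: nat and P :: "(bool list \<Rightarrow> bool list) set"
  assumes sub: "subgroup P (G (Suc n))"
    and surj: "restr n ` P = carrier (G n)"
begin

lemma P_ta: "p \<in> P \<Longrightarrow> tree_aut (Suc n) p"
  using subgroup.subset[OF sub] by (auto simp: carrier_G)

lemma id_P: "id \<in> P"
  using subgroup.one_closed[OF sub] by simp

lemma tog_empty_P: "tog n {} \<in> P"
  using id_P by (simp add: tog_empty)

lemma comp_P: "p \<in> P \<Longrightarrow> q \<in> P \<Longrightarrow> p \<circ> q \<in> P"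
  using subgroup.m_closed[OF sub] by fastforce

lemma tog_sd_P: "tog n S \<in> P \<Longrightarrow> tog n T \<in> P \<Longrightarrow> tog n (sd S T) \<in> P"
  using comp_P tog_comp by metis

lemma inv_P: "p \<in> P \<Longrightarrow> inv_into UNIV p \<in> P"
  using subgroup.m_inv_closed[OF sub] inv_G P_ta by metis

lemma conj_P:
  assumes p: "p \<in> P" and t: "tog n S \<in> P" and S: "\<And>u. u \<in> S \<Longrightarrow> length u = n"
  shows "tog n (p ` S) \<in> P"
proof -
  have ta: "tree_aut (Suc n) p" using P_ta[OF p] .
  have "p \<circ> inv_into UNIV p = id" using ta_bij[OF ta] by (simp add: bij_def surj_iff)
  then have "p \<circ> tog n S \<circ> inv_into UNIV p = tog n (p ` S)"
    using conj_tog[OF ta S] by (metis comp_assoc comp_id)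
  moreover have "p \<circ> tog n S \<circ> inv_into UNIV p \<in> P" using comp_P inv_P p t by metis
  ultimately show ?thesis by simp
qed

lemma exists_p: "\<exists>p\<in>P. \<forall>w. length w \<le> n \<longrightarrow> p w = portr f [] w"
proof -
  have "portn n f \<in> carrier (G n)" using portn_ta by (simp add: carrier_G)
  then obtain p where p: "p \<in> P" "restr n p = portn n f" using surj by (metis imageE)
  have "\<forall>w. length w \<le> n \<longrightarrow> p w = portr f [] w"
  proof (intro allI impI)
    fix w :: "bool list" assume "length w \<le> n"
    then show "p w = portr f [] w" using fun_cong[OF p(2), of w] by (simp add: restr_def portn_def)
  qed
  then show ?thesis using p by blast
qed

lemma transport_pair:
  assumes P: "tog n {u, v} \<in> P"
    and lu: "length u = n" and lv: "length v = n" and lu': "length u' = n" and lv': "length v' = n"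
    and k: "k < n" and tk: "take k u = take k v" and tk': "take k u' = take k v'"
    and dk: "u ! k \<noteq> v ! k" and dk': "u' ! k \<noteq> v' ! k"
  shows "tog n {u', v'} \<in> P"
proof -
  obtain f where f: "portr f [] u = u'" "portr f [] v = v'" using port_pair[OF assms(2-)] by blast
  obtain p where p: "p \<in> P" "\<forall>w. length w \<le> n \<longrightarrow> p w = portr f [] w" using exists_p by blast
  have "p ` {u, v} = {u', v'}" using p(2) f lu lv by simp
  then show ?thesis using conj_P[OF p(1) P] lu lv by auto
qed

lemma transport_single:
  assumes P: "tog n {u} \<in> P" and lu: "length u = n" and lu': "length u' = n"
  shows "tog n {u'} \<in> P"
proof -
  obtain f where f: "portr f [] u = u'" using port_single[OF lu lu'] by blast
  obtain p where p: "p \<in> P" "\<forall>w. length w \<le> n \<longrightarrow> p w = portr f [] w" using exists_p by blast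
  have "p ` {u} = {u'}" using p(2) f lu by simp
  then show ?thesis using conj_P[OF p(1) P] lu by auto
qed

abbreviation GG where "GG \<equiv> G (Suc n)"

lemma coset_tog:
  assumes g: "g \<in> carrier GG"
  shows "\<exists>S. S \<subseteq> {u. length u = n} \<and> P #>\<^bsub>GG\<^esub> g = P #>\<^bsub>GG\<^esub> tog n S"
proof -
  have tg: "tree_aut (Suc n) g" using g by (simp add: carrier_G)
  have "restr n g \<in> carrier (G n)" using ta_restr[OF tg] by (simp add: carrier_G)
  then obtain p where p: "p \<in> P" "restr n p = restr n g" using surj by (metis imageE)
  have tp: "tree_aut (Suc n) p" using P_ta[OF p(1)] .
  define k where "k = inv_into UNIV p \<circ> g"
  have tk: "tree_aut (Suc n) k" unfolding k_def by (rule ta_comp[OF ta_inv[OF tp] tg])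
  have bp: "bij p" using ta_bij[OF tp] .
  have fx: "\<And>w. length w \<le> n \<Longrightarrow> k w = w"
  proof -
    fix w :: "bool list" assume "length w \<le> n"
    then have "g w = p w" using fun_cong[OF p(2), of w] by (simp add: restr_def)
    moreover have "inj p" using bp by (simp add: bij_def)
    ultimately show "k w = w" unfolding k_def by simp
  qed
  define S where "S = {u. length u = n \<and> k (u @ [False]) = u @ [True]}"
  have kS: "k = tog n S" using kernel_tog[OF tk fx] S_def by simp
  have pinv: "p \<circ> inv_into UNIV p = id" using bp by (simp add: bij_def surj_iff)
  have gpk: "g = p \<otimes>\<^bsub>GG\<^esub> k" unfolding mult_G k_def by (metis comp_assoc id_comp pinv)
  have grp: "group GG" by (rule group_G)
  have pc: "p \<in> carrier GG" "k \<in> carrier GG" using tp tk by (simp_all add: carrier_G)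
  have "(P #>\<^bsub>GG\<^esub> p) #>\<^bsub>GG\<^esub> k = P #>\<^bsub>GG\<^esub> (p \<otimes>\<^bsub>GG\<^esub> k)"
    by (rule group.coset_mult_assoc[OF grp subgroup.subset[OF sub] pc])
  then have "P #>\<^bsub>GG\<^esub> g = (P #>\<^bsub>GG\<^esub> p) #>\<^bsub>GG\<^esub> k" using gpk by simp
  also have "P #>\<^bsub>GG\<^esub> p = P" by (rule group.coset_join2[OF grp pc(1) sub p(1)])
  finally have "P #>\<^bsub>GG\<^esub> g = P #>\<^bsub>GG\<^esub> tog n S" using kS by simp
  moreover have "S \<subseteq> {u. length u = n}" unfolding S_def by blast
  ultimately show ?thesis by blast
qed

lemma coset_eqD:
  assumes "P #>\<^bsub>GG\<^esub> tog n S = P #>\<^bsub>GG\<^esub> tog n T"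
  shows "tog n (sd S T) \<in> P"
proof -
  have grp: "group GG" by (rule group_G)
  have c: "tog n S \<in> carrier GG" "tog n T \<in> carrier GG" by (simp_all add: carrier_G tog_ta)
  have "tog n S \<in> P #>\<^bsub>GG\<^esub> tog n T" using group.rcos_self[OF grp c(1) sub] assms by simp
  then have "tog n S \<otimes>\<^bsub>GG\<^esub> inv\<^bsub>GG\<^esub> tog n T \<in> P"
    using subgroup.rcos_module_imp[OF sub grp c(2)] by blast
  then show ?thesis by (simp add: tog_inv_G tog_comp)
qed

lemma coset_eqI:
  assumes "tog n (sd S T) \<in> P"
  shows "P #>\<^bsub>GG\<^esub> tog n S = P #>\<^bsub>GG\<^esub> tog n T"
proof -
  have grp: "group GG" by (rule group_G)
  have e: "sd (sd S T) T = S" by (auto simp: sd_def)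
  have tS: "tog n S = tog n (sd S T) \<otimes>\<^bsub>GG\<^esub> tog n T" using tog_comp[of n "sd S T" T] e by simp
  have c: "tog n (sd S T) \<in> carrier GG" "tog n T \<in> carrier GG" by (simp_all add: carrier_G tog_ta)
  have "(P #>\<^bsub>GG\<^esub> tog n (sd S T)) #>\<^bsub>GG\<^esub> tog n T = P #>\<^bsub>GG\<^esub> (tog n (sd S T) \<otimes>\<^bsub>GG\<^esub> tog n T)"
    by (rule group.coset_mult_assoc[OF grp subgroup.subset[OF sub] c])
  then have "P #>\<^bsub>GG\<^esub> tog n S = (P #>\<^bsub>GG\<^esub> tog n (sd S T)) #>\<^bsub>GG\<^esub> tog n T"
    using tS by simp
  also have "P #>\<^bsub>GG\<^esub> tog n (sd S T) = P"
    by (rule group.coset_join2[OF grp c(1) sub assms])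
  finally show ?thesis .
qed

lemma reduce:
  assumes Rs0: "{} \<in> Rs" and Rcl: "\<And>R z. R \<in> Rs \<Longrightarrow> length z = n \<Longrightarrow> sd R {r z} \<in> Rs"
    and rz: "\<And>z. length z = n \<Longrightarrow> tog n (sd {z} {r z}) \<in> P"
  shows "finite S \<Longrightarrow> S \<subseteq> {u. length u = n} \<Longrightarrow> \<exists>R\<in>Rs. tog n (sd S R) \<in> P"
proof (induction S rule: finite_induct)
  case empty
  then show ?case using Rs0 tog_empty_P by (auto simp: sd_def)
next
  case (insert z S)
  then obtain R where R: "R \<in> Rs" "tog n (sd S R) \<in> P" by auto
  have lz: "length z = n" using insert by auto
  have "tog n (sd (sd S R) (sd {z} {r z})) \<in> P" using tog_sd_P R(2) rz[OF lz] by blast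
  moreover have "sd (sd S R) (sd {z} {r z}) = sd (insert z S) (sd R {r z})"
    using insert(2) by (auto simp: sd_def)
  ultimately show ?case using Rcl[OF R(1) lz] by auto
qed

lemma rcosets_sub:
  assumes Rs0: "{} \<in> Rs" and Rcl: "\<And>R z. R \<in> Rs \<Longrightarrow> length z = n \<Longrightarrow> sd R {r z} \<in> Rs"
    and rz: "\<And>z. length z = n \<Longrightarrow> tog n (sd {z} {r z}) \<in> P"
  shows "rcosets\<^bsub>GG\<^esub> P \<subseteq> (\<lambda>R. P #>\<^bsub>GG\<^esub> tog n R) ` Rs"
proof
  fix C assume "C \<in> rcosets\<^bsub>GG\<^esub> P"
  then obtain g where g: "g \<in> carrier GG" "C = P #>\<^bsub>GG\<^esub> g" by (auto simp: RCOSETS_def)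
  obtain S where S: "S \<subseteq> {u. length u = n}" "C = P #>\<^bsub>GG\<^esub> tog n S" using coset_tog[OF g(1)] g(2) by auto
  have "finite S" using S(1) leaves_finite finite_subset by blast
  then obtain R where R: "R \<in> Rs" "tog n (sd S R) \<in> P" using reduce[OF assms] S(1) by blast
  show "C \<in> (\<lambda>R. P #>\<^bsub>GG\<^esub> tog n R) ` Rs" using coset_eqI[OF R(2)] S(2) R(1) by auto
qed

lemma rcosets_sup: "(\<lambda>R. P #>\<^bsub>GG\<^esub> tog n R) ` Rs \<subseteq> rcosets\<^bsub>GG\<^esub> P"
proof
  fix C assume "C \<in> (\<lambda>R. P #>\<^bsub>GG\<^esub> tog n R) ` Rs"
  then obtain R where "C = P #>\<^bsub>GG\<^esub> tog n R" by blast
  moreover have "tog n R \<in> carrier GG" by (simp add: carrier_G tog_ta)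
  ultimately show "C \<in> rcosets\<^bsub>GG\<^esub> P" unfolding RCOSETS_def by blast
qed

end



context setting begin

lemma coset_neq: "tog n (sd S T) \<notin> P \<Longrightarrow> P #>\<^bsub>GG\<^esub> tog n S \<noteq> P #>\<^bsub>GG\<^esub> tog n T"
  using coset_eqD by blast

lemma pair0_in:
  assumes P: "tog n {u0, v0} \<in> P" and l: "length u0 = n" "length v0 = n" "length u = n" "length v = n"
    and n: "0 < n" and d0: "u0 ! 0 \<noteq> v0 ! 0" and d: "u ! 0 \<noteq> v ! 0"
  shows "tog n {u, v} \<in> P"
  using transport_pair[OF P l n _ _ d0 d] by simp

lemma pair1_in:
  assumes P: "tog n {u0, v0} \<in> P" and l: "length u0 = n" "length v0 = n" "length u = n" "length v = n"
    and n: "1 < n" and t0: "u0 ! 0 = v0 ! 0" and t: "u ! 0 = v ! 0"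
    and d0: "u0 ! 1 \<noteq> v0 ! 1" and d: "u ! 1 \<noteq> v ! 1"
  shows "tog n {u, v} \<in> P"
proof -
  have "take 1 u0 = take 1 v0" using t0 l n by (cases u0; cases v0) auto
  moreover have "take 1 u = take 1 v" using t l n by (cases u; cases v) auto
  ultimately
  show ?thesis using transport_pair[OF P l n _ _ d0 d] by simp
qed

lemma sd_pair: "u \<noteq> w \<Longrightarrow> v \<noteq> w \<Longrightarrow> u \<noteq> v \<Longrightarrow> sd {u, w} {w, v} = {u, v}"
  by (auto simp: sd_def)

lemma all_pairs:
  assumes P: "tog n {u0, v0} \<in> P" and l0: "length u0 = n" "length v0 = n" and d0: "u0 ! 0 \<noteq> v0 ! 0"
    and l: "length u = n" "length v = n" and uv: "u \<noteq> v"
  shows "tog n {u, v} \<in> P"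
proof -
  have n: "0 < n" using l0 d0 by (cases u0) auto
  show ?thesis
  proof (cases "u ! 0 = v ! 0")
    case False
    then show ?thesis using pair0_in[OF P l0 l n d0] by simp
  next
    case True
    define w where "w = (\<not> u ! 0) # replicate (n - 1) False"
    have lw: "length w = n" using n by (simp add: w_def)
    have w0: "w ! 0 = (\<not> u ! 0)" by (simp add: w_def)
    have a1: "tog n {u, w} \<in> P" using pair0_in[OF P l0 l(1) lw n d0] w0 by simp
    have a2: "tog n {w, v} \<in> P" using pair0_in[OF P l0 lw l(2) n d0] w0 True by simp
    have "u \<noteq> w" "v \<noteq> w" using w0 True by auto
    then show ?thesis using tog_sd_P[OF a1 a2] sd_pair uv by metis
  qed
qed

lemma same_half:
  assumes P: "tog n {u0, v0} \<in> P" and l0: "length u0 = n" "length v0 = n" and n: "1 < n"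
    and t0: "u0 ! 0 = v0 ! 0" and d0: "u0 ! 1 \<noteq> v0 ! 1"
    and l: "length u = n" "length v = n" and uv: "u \<noteq> v" and t: "u ! 0 = v ! 0"
  shows "tog n {u, v} \<in> P"
proof (cases "u ! 1 = v ! 1")
  case False
  then show ?thesis using pair1_in[OF P l0 l n t0 t d0] by simp
next
  case True
  define w where "w = u ! 0 # (\<not> u ! 1) # replicate (n - 2) False"
  have lw: "length w = n" using n by (simp add: w_def)
  have w0: "w ! 0 = u ! 0" "w ! 1 = (\<not> u ! 1)" by (simp_all add: w_def)
  have a1: "tog n {u, w} \<in> P" using pair1_in[OF P l0 l(1) lw n t0 _ d0] w0 by simp
  have a2: "tog n {w, v} \<in> P" using pair1_in[OF P l0 lw l(2) n t0 _ d0] w0 True t by simp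
  have "u \<noteq> w" "v \<noteq> w" using w0 True by auto
  then show ?thesis using tog_sd_P[OF a1 a2] sd_pair uv by metis
qed

lemma single_not:
  assumes nP: "tog n {x, x'} \<notin> P" and l: "length x = n" "length x' = n" "length u = n"
    and xx: "x \<noteq> x'"
  shows "tog n {u} \<notin> P"
proof
  assume "tog n {u} \<in> P"
  then have "tog n {x} \<in> P" "tog n {x'} \<in> P" using transport_single l by blast+
  then have "tog n (sd {x} {x'}) \<in> P" using tog_sd_P by blast
  moreover have "sd {x} {x'} = {x, x'}" using xx by (auto simp: sd_def)
  ultimately show False using nP by simp
qed

lemma dir1:
  assumes H1: "\<And>u v. length u = n \<Longrightarrow> length v = n \<Longrightarrow> u \<noteq> v \<Longrightarrow> u ! 0 = v ! 0 \<Longrightarrow> tog n {u, v} \<in> P"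
    and nP: "tog n {x, x'} \<notin> P" and l: "length x = n" "length x' = n"
    and x0: "x ! 0 = False" and x'0: "x' ! 0 = True"
  shows "card (rcosets\<^bsub>GG\<^esub> P) = 4"
proof -
  have xx: "x \<noteq> x'" using x0 x'0 by auto
  define Rs where "Rs = {{}, {x}, {x'}, {x, x'}}"
  define r where "r z = (if z ! 0 then x' else x)" for z :: "bool list"
  have Rs0: "{} \<in> Rs" by (simp add: Rs_def)
  have Rcl: "sd R {r z} \<in> Rs" if "R \<in> Rs" for R z
  proof -
    have "r z = x \<or> r z = x'" by (simp add: r_def)
    then show ?thesis using that xx unfolding Rs_def sd_def by (elim disjE) auto
  qed
  have rz: "tog n (sd {z} {r z}) \<in> P" if lz: "length z = n" for z
  proof (cases "z = r z")
    case True
    then show ?thesis using tog_empty_P by (simp add: sd_def)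
  next
    case False
    have "sd {z} {r z} = {z, r z}" using False by (auto simp: sd_def)
    moreover have "length (r z) = n" "r z ! 0 = z ! 0" using l x0 x'0 by (auto simp: r_def)
    ultimately show ?thesis using H1[OF lz _ False] by simp
  qed
  have eq: "rcosets\<^bsub>GG\<^esub> P = (\<lambda>R. P #>\<^bsub>GG\<^esub> tog n R) ` Rs"
    using rcosets_sub[OF Rs0 Rcl rz] rcosets_sup by blast
  have s1: "tog n {x} \<notin> P" "tog n {x'} \<notin> P" using single_not[OF nP l _ xx] l by auto
  have e: "sd {} {x} = {x}" "sd {} {x'} = {x'}" "sd {} {x, x'} = {x, x'}" "sd {x} {x'} = {x, x'}"
    "sd {x} {x, x'} = {x'}" "sd {x'} {x, x'} = {x}" using xx by (auto simp: sd_def)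
  have ne: "P #>\<^bsub>GG\<^esub> tog n {} \<noteq> P #>\<^bsub>GG\<^esub> tog n {x}"
    "P #>\<^bsub>GG\<^esub> tog n {} \<noteq> P #>\<^bsub>GG\<^esub> tog n {x'}"
    "P #>\<^bsub>GG\<^esub> tog n {} \<noteq> P #>\<^bsub>GG\<^esub> tog n {x, x'}"
    "P #>\<^bsub>GG\<^esub> tog n {x} \<noteq> P #>\<^bsub>GG\<^esub> tog n {x'}"
    "P #>\<^bsub>GG\<^esub> tog n {x} \<noteq> P #>\<^bsub>GG\<^esub> tog n {x, x'}"
    "P #>\<^bsub>GG\<^esub> tog n {x'} \<noteq> P #>\<^bsub>GG\<^esub> tog n {x, x'}"
    using coset_neq e s1 nP by metis+
  show ?thesis unfolding eq Rs_def using ne by simp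
qed

lemma dir2a:
  assumes P: "tog n {u0, v0} \<in> P" and l0: "length u0 = n" "length v0 = n" and d0: "u0 ! 0 \<noteq> v0 ! 0"
  shows "card (rcosets\<^bsub>GG\<^esub> P) \<le> 2"
proof -
  define Rs where "Rs = {{}, {u0}}"
  define r where "r z = u0" for z :: "bool list"
  have Rs0: "{} \<in> Rs" by (simp add: Rs_def)
  have Rcl: "sd R {r z} \<in> Rs" if "R \<in> Rs" for R z
    using that unfolding Rs_def sd_def r_def by auto
  have rz: "tog n (sd {z} {r z}) \<in> P" if lz: "length z = n" for z
  proof (cases "z = u0")
    case True
    then show ?thesis using tog_empty_P by (simp add: sd_def r_def)
  next
    case False
    have "sd {z} {r z} = {z, u0}" using False by (auto simp: sd_def r_def)
    then show ?thesis using all_pairs[OF P l0 d0 lz l0(1) False] by simp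
  qed
  have sub: "rcosets\<^bsub>GG\<^esub> P \<subseteq> (\<lambda>R. P #>\<^bsub>GG\<^esub> tog n R) ` Rs"
    using rcosets_sub[OF Rs0 Rcl rz] .
  have "card ((\<lambda>R. P #>\<^bsub>GG\<^esub> tog n R) ` Rs) \<le> 2"
    unfolding Rs_def by (simp add: card_insert_if)
  then show ?thesis using card_mono[OF _ sub] by (simp add: Rs_def)
qed

lemma dir2b:
  assumes n: "n = Suc (Suc m)"
    and n0: "tog n {replicate n False, True # replicate (n - 1) False} \<notin> P"
    and n1: "tog n {False # True # replicate (n - 2) False, replicate n False} \<notin> P"
  shows "card (rcosets\<^bsub>GG\<^esub> P) \<noteq> 4"
proof
  assume c4: "card (rcosets\<^bsub>GG\<^esub> P) = 4"
  define x where "x = False # False # replicate m False"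
  define x' where "x' = True # False # replicate m False"
  define y where "y = False # True # replicate m False"
  define y' where "y' = True # True # replicate m False"
  have l: "length x = n" "length x' = n" "length y = n" "length y' = n"
    by (simp_all add: n x_def x'_def y_def y'_def)
  have nP0: "tog n {x, x'} \<notin> P" using n0 by (simp add: n x_def x'_def)
  have nP1: "tog n {x, y} \<notin> P" using n1 by (simp add: n x_def y_def insert_commute)
  have np0: "tog n {u, v} \<notin> P" if "length u = n" "length v = n" "u ! 0 \<noteq> v ! 0" for u v
    using pair0_in[OF _ that(1,2) l(1,2) _ that(3)] nP0 n by (auto simp: x_def x'_def)
  have np1: "tog n {u, v} \<notin> P" if "length u = n" "length v = n" "u ! 0 = v ! 0" "u ! 1 \<noteq> v ! 1" for u v
    using pair1_in[OF _ that(1,2) l(1,3) _ that(3) _ that(4)] nP1 n by (auto simp: x_def y_def)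
  have xx: "x \<noteq> x'" by (simp add: x_def x'_def)
  have s: "tog n {u} \<notin> P" if "length u = n" for u using single_not[OF nP0 l(1,2) that xx] .
  have p: "tog n {x, y} \<notin> P" "tog n {x, x'} \<notin> P" "tog n {x, y'} \<notin> P"
    "tog n {y, x'} \<notin> P" "tog n {y, y'} \<notin> P" "tog n {x', y'} \<notin> P"
    using np0 np1 l by (auto simp: x_def x'_def y_def y'_def)
  have e: "\<And>u. sd {} {u} = {u}" "\<And>u v. u \<noteq> v \<Longrightarrow> sd {u} {v} = {u, v}" by (auto simp: sd_def)
  have dist: "x \<noteq> y" "x \<noteq> x'" "x \<noteq> y'" "y \<noteq> x'" "y \<noteq> y'" "x' \<noteq> y'"
    by (simp_all add: x_def x'_def y_def y'_def)
  let ?C = "\<lambda>R. P #>\<^bsub>GG\<^esub> tog n R"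
  have ne: "?C {} \<noteq> ?C {x}" "?C {} \<noteq> ?C {y}" "?C {} \<noteq> ?C {x'}" "?C {} \<noteq> ?C {y'}"
    "?C {x} \<noteq> ?C {y}" "?C {x} \<noteq> ?C {x'}" "?C {x} \<noteq> ?C {y'}"
    "?C {y} \<noteq> ?C {x'}" "?C {y} \<noteq> ?C {y'}" "?C {x'} \<noteq> ?C {y'}"
    using coset_neq e dist p s l by metis+
  have sup: "?C ` {{}, {x}, {y}, {x'}, {y'}} \<subseteq> rcosets\<^bsub>GG\<^esub> P" by (rule rcosets_sup)
  have fin: "finite (rcosets\<^bsub>GG\<^esub> P)" using c4 by (metis card.infinite zero_neq_numeral)
  have "card (?C ` {{}, {x}, {y}, {x'}, {y'}}) = 5" using ne by simp
  then show False using card_mono[OF fin sup] c4 by simp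
qed

end



theorem mainTheorem15:
  fixes d :: nat and P :: "(bool list \<Rightarrow> bool list) set"
  assumes "d \<ge> 2"
    and "essential_pattern d P"
    and "restr (d - 1) ` P = carrier (G (d - 1))"
  shows "(comm d (a d 1) (a d (d - 1)) \<in> P \<and> comm d (a d 0) (a d (d - 1)) \<notin> P)
         \<longleftrightarrow> tree_index d P = 4"
proof -
  obtain n where dn: "d = Suc n" and n1: "1 \<le> n" using assms(1) by (metis Suc_le_D Suc_le_mono One_nat_def numeral_2_eq_2)
  have sub: "subgroup P (G (Suc n))" using assms(2) dn by (simp add: essential_pattern_def)
  have st: "setting n P" using sub assms(3) dn by (simp add: setting_def)
  interpret setting n P by (rule st)
  define x where "x = replicate n False"
  define x' where "x' = True # replicate (n - 1) False"
  have lx: "length x = n" "length x' = n" using n1 by (simp_all add: x_def x'_def)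
  have x0: "x ! 0 = False" "x' ! 0 = True" using n1 by (simp_all add: x_def x'_def)
  have c0: "comm d (a d 0) (a d (d - 1)) = tog n {x, x'}"
    using comm_a[of 0 n] n1 dn by (simp add: x_def x'_def insert_commute)
  have ti: "tree_index d P = card (rcosets\<^bsub>GG\<^esub> P)" by (simp add: tree_index_def dn)
  show ?thesis
  proof (cases "n = 1")
    case True
    have "comm d (a d 1) (a d (d - 1)) = id"
    proof -
      have e: "a d 1 = a d (d - 1)" using True dn by simp
      have ia: "inv\<^bsub>G d\<^esub> (a d 1) = a d 1" using inv_G_invol[OF a_ta a_invol] .
      show ?thesis unfolding comm_def e[symmetric] ia using a_invol[of d 1]
        by (simp add: comp_assoc)
    qed
    then have c1: "comm d (a d 1) (a d (d - 1)) \<in> P" using id_P by simp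
    have H1: "tog n {u, v} \<in> P" if "length u = n" "length v = n" "u \<noteq> v" "u ! 0 = v ! 0" for u v
    proof -
      have "u = v" using that True by (cases u; cases v) auto
      then show ?thesis using that by simp
    qed
    show ?thesis
    proof
      assume "comm d (a d 1) (a d (d - 1)) \<in> P \<and> comm d (a d 0) (a d (d - 1)) \<notin> P"
      then have nP: "tog n {x, x'} \<notin> P" using c0 by simp
      have "card (rcosets\<^bsub>GG\<^esub> P) = 4"
      proof (rule dir1[where x=x and x'=x'])
        show "\<And>u v. length u = n \<Longrightarrow> length v = n \<Longrightarrow> u \<noteq> v \<Longrightarrow> u ! 0 = v ! 0 \<Longrightarrow> tog n {u, v} \<in> P"
          by (rule H1)
      qed (simp_all add: nP lx x0)
      then show "tree_index d P = 4" using ti by simp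
    next
      assume t4: "tree_index d P = 4"
      have "tog n {x, x'} \<notin> P"
      proof
        assume "tog n {x, x'} \<in> P"
        then have "card (rcosets\<^bsub>GG\<^esub> P) \<le> 2" by (rule dir2a[OF _ lx]) (simp add: x0)
        then show False using t4 ti by simp
      qed
      then show "comm d (a d 1) (a d (d - 1)) \<in> P \<and> comm d (a d 0) (a d (d - 1)) \<notin> P"
        using c1 c0 by simp
    qed
  next
    case False
    then obtain m where nm: "n = Suc (Suc m)" using n1 by (cases n; cases "n - 1") auto
    define y where "y = False # True # replicate (n - 2) False"
    have ly: "length y = n" using nm by (simp add: y_def)
    have c1: "comm d (a d 1) (a d (d - 1)) = tog n {y, x}"
      using comm_a[of 1 n] nm dn by (simp add: x_def y_def)
    show ?thesis
    proof
      assume A: "comm d (a d 1) (a d (d - 1)) \<in> P \<and> comm d (a d 0) (a d (d - 1)) \<notin> P"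
      then have yx: "tog n {y, x} \<in> P" and nP: "tog n {x, x'} \<notin> P" using c0 c1 by simp_all
      have H1: "tog n {u, v} \<in> P" if "length u = n" "length v = n" "u \<noteq> v" "u ! 0 = v ! 0" for u v
        using same_half[OF yx ly lx(1) _ _ _ that] nm by (simp add: x_def y_def)
      have "card (rcosets\<^bsub>GG\<^esub> P) = 4"
      proof (rule dir1[where x=x and x'=x'])
        show "\<And>u v. length u = n \<Longrightarrow> length v = n \<Longrightarrow> u \<noteq> v \<Longrightarrow> u ! 0 = v ! 0 \<Longrightarrow> tog n {u, v} \<in> P"
          by (rule H1)
      qed (simp_all add: nP lx x0)
      then show "tree_index d P = 4" using ti by simp
    next
      assume t4: "tree_index d P = 4"
      have nP: "tog n {x, x'} \<notin> P"
      proof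
        assume "tog n {x, x'} \<in> P"
        then have "card (rcosets\<^bsub>GG\<^esub> P) \<le> 2" by (rule dir2a[OF _ lx]) (simp add: x0)
        then show False using t4 ti by simp
      qed
      have "tog n {y, x} \<in> P"
      proof (rule ccontr)
        assume "tog n {y, x} \<notin> P"
        then show False using dir2b[OF nm] nP t4 ti by (simp add: x_def x'_def y_def)
      qed
      then show "comm d (a d 1) (a d (d - 1)) \<in> P \<and> comm d (a d 0) (a d (d - 1)) \<notin> P"
        using c0 c1 nP by simp
    qed
  qed
qed

end
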